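(* Let $G$ be a finite-centre semisimple Lie group without compact factors, $X=G/K$, $x_0\in X$, $\Gamma\leq G$ a uniform lattice and $\Lambda\leq G$ a discrete subgroup with $\Gamma\cdot x_0\subset\mathcal{N}_u(\Lambda\cdot x_0)$, where $u$ is monotonically increasing with $u(r)\preceq_\infty\varepsilon r$ for some $0<\varepsilon<1$. Let $x\in X$. There exists $S=S(x,u)\in(0,1)$ such that for every $s\in(0,S)$ there is $R=R(s,S)$ such that if $r>R$ and $B=B(y,r)$ is a $\Lambda$-free ball tangent to $x$, then $sB:=B(y,sr)$ is $\Gamma$-free. In particular, the existence of arbitrarily large $\Lambda$-free balls all tangent to a fixed point $x\in X$ implies the existence of arbitrarily large $\Gamma$-free balls.
   Context: $f\preceq_\infty g$ means $\limsup f/g\leq1$. $\mathcal{N}_u(Y)=\{z: d(z,Y)\leq u(d(z,x_0))\}$. For $H\leq G$, a set $U\subset X$ is $H$-free if its topological interior does not meet $H\cdot x_0$. A ball $B(y,r)$ is tangent to $x$ if $d(x,y)=r$. *)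

theory Defs
  imports "HOL-Analysis.Analysis" "HOL-Algebra.Group"
begin

text \<open>Abstract setting: a group G (HOL-Algebra) acting by isometries on a metric space X
  (the type 'x), standing in for a semisimple Lie group acting on X = G/K.\<close>

definition isometric_action :: "('g, 'b) monoid_scheme \<Rightarrow> ('g \<Rightarrow> 'x::metric_space \<Rightarrow> 'x) \<Rightarrow> bool" where
  "isometric_action G act \<longleftrightarrow> group G \<and> act \<one>\<^bsub>G\<^esub> = id
     \<and> (\<forall>g\<in>carrier G. \<forall>h\<in>carrier G. act (g \<otimes>\<^bsub>G\<^esub> h) = act g \<circ> act h)
     \<and> (\<forall>g\<in>carrier G. \<forall>a b. dist (act g a) (act g b) = dist a b)"

definition transitive_action :: "('g, 'b) monoid_scheme \<Rightarrow> ('g \<Rightarrow> 'x \<Rightarrow> 'x) \<Rightarrow> bool" where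
  "transitive_action G act \<longleftrightarrow> (\<forall>a b. \<exists>g\<in>carrier G. act g a = b)"

definition geodesic_space :: "'x::metric_space itself \<Rightarrow> bool" where
  "geodesic_space TYPE('x) \<longleftrightarrow> (\<forall>a b::'x. \<exists>\<gamma>::real \<Rightarrow> 'x. \<gamma> 0 = a \<and> \<gamma> (dist a b) = b \<and>
      (\<forall>s\<in>{0..dist a b}. \<forall>t\<in>{0..dist a b}. dist (\<gamma> s) (\<gamma> t) = \<bar>s - t\<bar>))"

definition proper_space :: "'x::metric_space itself \<Rightarrow> bool" where
  "proper_space TYPE('x) \<longleftrightarrow> (\<forall>z::'x. \<forall>R. compact (cball z R))"

definition orbit :: "('g \<Rightarrow> 'x \<Rightarrow> 'x) \<Rightarrow> 'g set \<Rightarrow> 'x \<Rightarrow> 'x set" where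
  "orbit act H x0 = (\<lambda>g. act g x0) ` H"

text \<open>Discreteness of a subgroup H (for a proper action): its orbits are locally finite.\<close>
definition discrete_subgroup :: "('g, 'b) monoid_scheme \<Rightarrow> ('g \<Rightarrow> 'x::metric_space \<Rightarrow> 'x) \<Rightarrow> 'g set \<Rightarrow> bool" where
  "discrete_subgroup G act H \<longleftrightarrow> subgroup H G \<and>
     (\<forall>a z. \<forall>R. finite (orbit act H a \<inter> cball z R))"

text \<open>Uniform (cocompact) lattice: a discrete subgroup whose orbits are coarsely dense.\<close>
definition uniform_lattice :: "('g, 'b) monoid_scheme \<Rightarrow> ('g \<Rightarrow> 'x::metric_space \<Rightarrow> 'x) \<Rightarrow> 'g set \<Rightarrow> bool" where
  "uniform_lattice G act H \<longleftrightarrow> discrete_subgroup G act H \<and>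
     (\<forall>a. \<exists>D. \<forall>z. \<exists>p\<in>orbit act H a. dist z p \<le> D)"

definition H_free :: "('g \<Rightarrow> 'x::topological_space \<Rightarrow> 'x) \<Rightarrow> 'g set \<Rightarrow> 'x \<Rightarrow> 'x set \<Rightarrow> bool" where
  "H_free act H x0 U \<longleftrightarrow> interior U \<inter> orbit act H x0 = {}"

definition nbhd_u :: "(real \<Rightarrow> real) \<Rightarrow> 'x::metric_space \<Rightarrow> 'x set \<Rightarrow> 'x set" where
  "nbhd_u u x0 Y = {z. infdist z Y \<le> u (dist z x0)}"

definition asymp_le :: "(real \<Rightarrow> real) \<Rightarrow> (real \<Rightarrow> real) \<Rightarrow> bool" where
  "asymp_le f g \<longleftrightarrow> Limsup at_top (\<lambda>t. ereal (f t / g t)) \<le> 1"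

end

theory Submission
  imports Defs
begin

lemma close_point:
  fixes z :: "'x::metric_space"
  assumes "Y \<noteq> {}"
  shows "\<exists>p\<in>Y. dist z p < infdist z Y + 1"
proof -
  have "(INF a\<in>Y. dist z a) < infdist z Y + 1"
    using infdist_notempty[OF assms] by simp
  then show ?thesis using assms by (simp add: cINF_less_iff)
qed

lemma u_bound:
  fixes u :: "real \<Rightarrow> real"
  assumes "asymp_le u (\<lambda>r. \<epsilon> * r)" "0 < \<epsilon>" "0 < \<delta>"
  shows "\<exists>T. \<forall>t\<ge>T. u t \<le> \<epsilon> * (1 + \<delta>) * t"
proof -
  have "Limsup at_top (\<lambda>t. ereal (u t / (\<epsilon> * t))) < ereal (1 + \<delta>)"
  proof -
    have "(1::ereal) < ereal (1 + \<delta>)" using assms(3) by (simp add: one_ereal_def)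
    then show ?thesis using assms(1) unfolding asymp_le_def by (rule order_le_less_trans[rotated])
  qed
  from Limsup_lessD[OF this] obtain T where T: "\<And>t. t \<ge> T \<Longrightarrow> u t / (\<epsilon> * t) < 1 + \<delta>"
    by (auto simp: eventually_at_top_linorder)
  show ?thesis
  proof (intro exI allI impI)
    fix t assume "max T 1 \<le> t"
    then have t: "t \<ge> T" "t > 0" by auto
    have "u t / (\<epsilon> * t) < 1 + \<delta>" using T t by auto
    then have "u t < (1 + \<delta>) * (\<epsilon> * t)" using t assms(2)
      by (simp add: divide_less_eq)
    then show "u t \<le> \<epsilon> * (1 + \<delta>) * t" by (simp add: algebra_simps)
  qed
qed

theorem lemma5p6:
  fixes G :: "('g, 'b) monoid_scheme"
    and act :: "'g \<Rightarrow> 'x::metric_space \<Rightarrow> 'x"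
    and \<Gamma> \<Lambda> :: "'g set"
    and x0 x :: 'x
    and u :: "real \<Rightarrow> real"
    and \<epsilon> :: real
  assumes "isometric_action G act"
    and "transitive_action G act"
    and "geodesic_space TYPE('x)"
    and "proper_space TYPE('x)"
    and "uniform_lattice G act \<Gamma>"
    and "discrete_subgroup G act \<Lambda>"
    and "orbit act \<Gamma> x0 \<subseteq> nbhd_u u x0 (orbit act \<Lambda> x0)"
    and "mono u"
    and "0 < \<epsilon>" and "\<epsilon> < 1"
    and "asymp_le u (\<lambda>r. \<epsilon> * r)"
  shows "(\<exists>S\<in>{0<..<1}. \<forall>s\<in>{0<..<S}. \<exists>R. \<forall>r>R. \<forall>y.
            H_free act \<Lambda> x0 (cball y r) \<and> dist x y = r
              \<longrightarrow> H_free act \<Gamma> x0 (cball y (s * r)))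
       \<and> ((\<forall>R. \<exists>r>R. \<exists>y. H_free act \<Lambda> x0 (cball y r) \<and> dist x y = r)
              \<longrightarrow> (\<forall>R. \<exists>r>R. \<exists>y. H_free act \<Gamma> x0 (cball y r)))"
proof -
  define S where "S = (1 - \<epsilon>) / (1 + \<epsilon>)"
  have S01: "S \<in> {0<..<1}" using assms(9,10) by (auto simp: S_def field_simps)
  have Lne: "orbit act \<Lambda> x0 \<noteq> {}"
    using assms(6) unfolding discrete_subgroup_def orbit_def
    by (auto dest: subgroup.one_closed)
  have main: "\<forall>s\<in>{0<..<S}. \<exists>R. \<forall>r>R. \<forall>y.
            H_free act \<Lambda> x0 (cball y r) \<and> dist x y = r
              \<longrightarrow> H_free act \<Gamma> x0 (cball y (s * r))"
  proof
    fix s assume s: "s \<in> {0<..<S}"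
    have "s * (1 + \<epsilon>) < 1 - \<epsilon>" using s assms(9) by (auto simp: S_def field_simps)
    then have a0: "0 < 1 - s - \<epsilon> * (1 + s)" by (simp add: algebra_simps)
    define \<delta> where "\<delta> = (1 - s - \<epsilon> * (1 + s)) / (2 * \<epsilon> * (1 + s))"
    have d0: "\<delta> > 0" using a0 s assms(9) by (auto simp: \<delta>_def)
    define e where "e = \<epsilon> * (1 + \<delta>)"
    have "e * (1 + s) = \<epsilon> * (1 + s) + (1 - s - \<epsilon> * (1 + s)) / 2"
    proof -
      have ne: "2 * \<epsilon> * (1 + s) \<noteq> 0" using s assms(9) by auto
      have "\<delta> * (2 * \<epsilon> * (1 + s)) = 1 - s - \<epsilon> * (1 + s)"
        unfolding \<delta>_def using ne by simp
      then show ?thesis unfolding e_def by (simp add: algebra_simps)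
    qed
    define a where "a = 1 - s - e * (1 + s)"
    have a: "a > 0"
    proof -
      have "a = (1 - s - \<epsilon> * (1 + s)) / 2" unfolding a_def \<open>e * (1 + s) = _\<close> by (simp add: field_simps)
      then show ?thesis using a0 by simp
    qed
    have e0: "e > 0" using d0 assms(9) by (simp add: e_def)
    obtain T where T: "\<And>t. t \<ge> T \<Longrightarrow> u t \<le> e * t"
      using u_bound[OF assms(11,9) d0] unfolding e_def by blast
    define c where "c = dist x x0"
    have c0: "c \<ge> 0" by (simp add: c_def)
    show "\<exists>R. \<forall>r>R. \<forall>y. H_free act \<Lambda> x0 (cball y r) \<and> dist x y = r
              \<longrightarrow> H_free act \<Gamma> x0 (cball y (s * r))"
    proof (intro exI allI impI)
      fix r y
      assume r: "max T ((e * c + 1) / a) < r"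
        and hy: "H_free act \<Lambda> x0 (cball y r) \<and> dist x y = r"
      have rT: "r > T" and ra: "e * c + 1 < a * r" using r a by (auto simp: field_simps)
      have r0: "r \<ge> 0" using hy by auto
      show "H_free act \<Gamma> x0 (cball y (s * r))"
        unfolding H_free_def
      proof (rule ccontr)
        assume "interior (cball y (s * r)) \<inter> orbit act \<Gamma> x0 \<noteq> {}"
        then obtain z where zi: "z \<in> cball y (s * r)" and zG: "z \<in> orbit act \<Gamma> x0"
          using interior_subset by blast
        have zy: "dist y z \<le> s * r" using zi by simp
        have "z \<in> nbhd_u u x0 (orbit act \<Lambda> x0)" using zG assms(7) by blast
        then have zu: "infdist z (orbit act \<Lambda> x0) \<le> u (dist z x0)" by (simp add: nbhd_u_def)
        have "dist z x0 \<le> dist z y + dist y x + dist x x0"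
          using dist_triangle[of z x0 y] dist_triangle[of y x0 x] by linarith
        then have "dist z x0 \<le> s * r + r + c" using zy hy
          by (simp add: c_def dist_commute)
        then have "dist z x0 \<le> (1 + s) * r + c" by (simp add: algebra_simps)
        then have "u (dist z x0) \<le> u ((1 + s) * r + c)"
          by (rule monoD[OF assms(8)])
        also have "\<dots> \<le> e * ((1 + s) * r + c)"
        proof -
          have "s * r \<ge> 0" using s r0 by simp
          then have "(1 + s) * r + c \<ge> T" using rT c0 by (simp add: algebra_simps)
          then show ?thesis using T by blast
        qed
        finally have zu2: "infdist z (orbit act \<Lambda> x0) \<le> e * ((1 + s) * r + c)" using zu by simp
        obtain p where p: "p \<in> orbit act \<Lambda> x0" "dist z p < infdist z (orbit act \<Lambda> x0) + 1"
          using close_point[OF Lne] by blast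
        have "dist y p \<le> dist y z + dist z p" by (rule dist_triangle)
        also have "\<dots> < s * r + e * ((1 + s) * r + c) + 1" using zy p zu2 by linarith
        also have "\<dots> = r - a * r + e * c + 1" by (simp add: a_def algebra_simps)
        also have "\<dots> < r" using ra by linarith
        finally have "p \<in> ball y r" by simp
        then have "p \<in> interior (cball y r)"
          using interior_maximal[OF ball_subset_cball open_ball] by blast
        then show False using hy p(1) unfolding H_free_def by blast
      qed
    qed
  qed
  have second: "(\<forall>R. \<exists>r>R. \<exists>y. H_free act \<Lambda> x0 (cball y r) \<and> dist x y = r)
              \<longrightarrow> (\<forall>R. \<exists>r>R. \<exists>y. H_free act \<Gamma> x0 (cball y r))"
  proof (intro impI allI)
    fix R0
    assume big: "\<forall>R. \<exists>r>R. \<exists>y. H_free act \<Lambda> x0 (cball y r) \<and> dist x y = r"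
    define s where "s = S / 2"
    have s: "s \<in> {0<..<S}" using S01 by (auto simp: s_def)
    obtain R where R: "\<And>r y. r > R \<Longrightarrow> H_free act \<Lambda> x0 (cball y r) \<and> dist x y = r
              \<Longrightarrow> H_free act \<Gamma> x0 (cball y (s * r))"
      using main s by blast
    obtain r y where ry: "r > max R (R0 / s)" "H_free act \<Lambda> x0 (cball y r) \<and> dist x y = r"
      using big by blast
    have "s * r > R0" using ry(1) s by (auto simp: field_simps)
    moreover have "H_free act \<Gamma> x0 (cball y (s * r))" using R ry by auto
    ultimately show "\<exists>r>R0. \<exists>y. H_free act \<Gamma> x0 (cball y r)" by blast
  qed
  show ?thesis using S01 main second by blast
qed

end
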